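(* Let $V_\theta$ be a real vector space of dimension $2$ and let $M\subset V_\theta\times[0,1]$ be a dichotomous item response hypersurface with associated function $f:V_\theta\to[0,1]$. Then there exists a nonzero $v\in V_\theta$ such that $f$ is constant on the line $\mathbb{R}\cdot v=\{\lambda v:\lambda\in\mathbb{R}\}$.
   Context: A dichotomous item response hypersurface (IRHS) is a $D=\dim V_\theta$ dimensional smooth submanifold $M$ of $V_\theta\times[0,1]$ such that for any two vectors $v,w\in V_\theta$, the intersection of $(w+\mathbb{R}\cdot v)\times[0,1]$ with $M$ is the graph of a monotonic function $w+\mathbb{R}\cdot v\to[0,1]$, where $w+\mathbb{R}\cdot v=\{w+\lambda v:\lambda\in\mathbb{R}\}$. A function $g:w+\mathbb{R}\cdot v\to[0,1]$ is monotonic if either $g(w+\lambda v)\le g(w+\mu v)$ for all $\lambda\le\mu$, or $g(w+\lambda v)\ge g(w+\mu v)$ for all $\lambda\le\mu$. Taking $v=0$ shows $M$ is the graph of a function $f:V_\theta\to[0,1]$, the associated function. *)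

theory Defs
  imports "HOL-Analysis.Analysis"
begin

text \<open>C^k maps between Euclidean spaces on a set S (intended for open S), defined
  via iterated continuous partial derivatives along the basis directions.\<close>
fun Ck_on :: "nat \<Rightarrow> ('a::euclidean_space \<Rightarrow> 'b::euclidean_space) \<Rightarrow> 'a set \<Rightarrow> bool" where
  "Ck_on 0 f S = continuous_on S f"
| "Ck_on (Suc k) f S =
     (continuous_on S f \<and>
      (\<forall>i\<in>Basis. \<exists>g. (\<forall>x\<in>S. ((\<lambda>t. f (x + t *\<^sub>R i)) has_vector_derivative g x) (at 0))
                     \<and> Ck_on k g S))"

definition smooth_on :: "('a::euclidean_space \<Rightarrow> 'b::euclidean_space) \<Rightarrow> 'a set \<Rightarrow> bool" where
  "smooth_on f S \<longleftrightarrow> (\<forall>k. Ck_on k f S)"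

text \<open>M is a d-dimensional embedded smooth submanifold (without boundary) of the
  Euclidean space 'b, where d = DIM('p): every point of M has a neighbourhood U
  such that M \<inter> U is the homeomorphic image of an open set of 'p under a smooth
  immersion.\<close>
definition smooth_submanifold :: "'p::euclidean_space itself \<Rightarrow> 'b::euclidean_space set \<Rightarrow> bool" where
  "smooth_submanifold _ M \<longleftrightarrow>
     (\<forall>p\<in>M. \<exists>U W (\<phi>::'p \<Rightarrow> 'b) \<psi>.
        open U \<and> p \<in> U \<and> open W \<and> smooth_on \<phi> W \<and>
        (\<forall>x\<in>W. \<exists>D. (\<phi> has_derivative D) (at x) \<and> inj D) \<and>
        homeomorphism W (M \<inter> U) \<phi> \<psi>)"

definition monotonic_on_line :: "('v::real_vector \<Rightarrow> real) \<Rightarrow> 'v \<Rightarrow> 'v \<Rightarrow> bool" where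
  "monotonic_on_line g w v \<longleftrightarrow>
     (\<forall>a b. a \<le> b \<longrightarrow> g (w + a *\<^sub>R v) \<le> g (w + b *\<^sub>R v)) \<or>
     (\<forall>a b. a \<le> b \<longrightarrow> g (w + a *\<^sub>R v) \<ge> g (w + b *\<^sub>R v))"

definition dichotomous_IRHS :: "('v::euclidean_space \<times> real) set \<Rightarrow> bool" where
  "dichotomous_IRHS M \<longleftrightarrow>
     M \<subseteq> UNIV \<times> {0..1} \<and>
     smooth_submanifold TYPE('v) M \<and>
     (\<forall>v w. \<exists>g::'v \<Rightarrow> real.
        g ` {w + a *\<^sub>R v | a. True} \<subseteq> {0..1} \<and>
        M \<inter> ({w + a *\<^sub>R v | a. True} \<times> {0..1}) = {(x, g x) | x. x \<in> {w + a *\<^sub>R v | a. True}} \<and>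
        monotonic_on_line g w v)"

end

theory Submission
  imports Defs "HOL-Homology.Invariance_of_Domain"
begin

lemma mono_lines:
  fixes M :: "('v::euclidean_space \<times> real) set" and f :: "'v \<Rightarrow> real"
  assumes "dichotomous_IRHS M" and "M = {(x, f x) | x. True}"
  shows "monotonic_on_line f w v"
proof -
  from assms(1) obtain g :: "'v \<Rightarrow> real" where
    g1: "M \<inter> ({w + a *\<^sub>R v | a. True} \<times> {0..1}) = {(x, g x) | x. x \<in> {w + a *\<^sub>R v | a. True}}"
    and g2: "monotonic_on_line g w v" and sub: "M \<subseteq> UNIV \<times> {0..1}"
    unfolding dichotomous_IRHS_def by blast
  have eq: "f (w + a *\<^sub>R v) = g (w + a *\<^sub>R v)" for a
  proof -
    have "(w + a *\<^sub>R v, f (w + a *\<^sub>R v)) \<in> M" using assms(2) by blast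
    moreover then have "f (w + a *\<^sub>R v) \<in> {0..1}" using sub by blast
    ultimately have "(w + a *\<^sub>R v, f (w + a *\<^sub>R v)) \<in> M \<inter> ({w + a *\<^sub>R v | a. True} \<times> {0..1})"
      by blast
    then show ?thesis unfolding g1 by auto
  qed
  show ?thesis using g2 unfolding monotonic_on_line_def eq .
qed

lemma cont_f:
  fixes M :: "('v::euclidean_space \<times> real) set" and f :: "'v \<Rightarrow> real"
  assumes "dichotomous_IRHS M" and "M = {(x, f x) | x. True}"
  shows "isCont f x"
proof -
  have "(x, f x) \<in> M" using assms(2) by blast
  with assms(1) obtain U W and \<phi> :: "'v \<Rightarrow> 'v \<times> real" and \<psi> where
    h: "open U" "(x, f x) \<in> U" "open W" "homeomorphism W (M \<inter> U) \<phi> \<psi>"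
    unfolding dichotomous_IRHS_def smooth_submanifold_def by blast
  define g where "g = fst \<circ> \<phi>"
  have phiM: "\<phi> y \<in> M" if "y \<in> W" for y using h(4) that unfolding homeomorphism_def by blast
  have cphi: "continuous_on W \<phi>" using h(4) unfolding homeomorphism_def by blast
  have cg: "continuous_on W g" unfolding g_def by (intro continuous_intros cphi)
  have phi_snd: "snd (\<phi> y) = f (g y)" if "y \<in> W" for y
    using phiM[OF that] assms(2) unfolding g_def by auto
  have injphi: "inj_on \<phi> W" using h(4) by (metis homeomorphism_apply1 inj_on_def)
  have "inj_on g W"
  proof (rule inj_onI)
    fix a b assume "a \<in> W" "b \<in> W" "g a = g b"
    then have "\<phi> a = \<phi> b" using phi_snd by (metis prod.collapse g_def comp_apply)
    then show "a = b" using injphi \<open>a \<in> W\<close> \<open>b \<in> W\<close> by (meson inj_onD)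
  qed
  then obtain h' where hom: "homeomorphism W (g ` W) g h'"
    using invariance_of_domain_homeomorphism[OF h(3) cg] by auto
  have opn: "open (g ` W)" using invariance_of_domain[OF cg h(3) \<open>inj_on g W\<close>] .
  have "\<psi> (x, f x) \<in> W" "\<phi> (\<psi> (x, f x)) = (x, f x)"
    using h(4) \<open>(x, f x) \<in> M\<close> h(2) unfolding homeomorphism_def by auto
  then have xin: "x \<in> g ` W" unfolding g_def by (metis comp_apply fst_conv image_eqI)
  have eqf: "f y = snd (\<phi> (h' y))" if "y \<in> g ` W" for y
  proof -
    have "h' y \<in> W" "g (h' y) = y" using hom that unfolding homeomorphism_def by auto
    then show ?thesis using phi_snd by metis
  qed
  have ch: "continuous_on (g ` W) (\<lambda>y. snd (\<phi> (h' y)))"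
  proof -
    have "continuous_on (g ` W) h'" "h' ` (g ` W) \<subseteq> W" using hom unfolding homeomorphism_def by auto
    then have "continuous_on (g ` W) (\<phi> \<circ> h')" using continuous_on_compose cphi continuous_on_subset by blast
    then show ?thesis by (intro continuous_intros) (simp add: comp_def)
  qed
  then have "continuous_on (g ` W) f" using eqf continuous_on_cong by force
  then show ?thesis using opn xin continuous_on_eq_continuous_at by blast
qed

lemma seg_const:
  fixes f :: "'v::real_vector \<Rightarrow> real"
  assumes "monotonic_on_line f 0 u" "f (N *\<^sub>R u) = f ((- N) *\<^sub>R u)" "\<bar>s\<bar> \<le> N"
  shows "f (s *\<^sub>R u) = f 0"
proof -
  have a: "- N \<le> s" "s \<le> N" "- N \<le> 0" "0 \<le> N" using assms(3) by auto
  from assms(1) show ?thesis unfolding monotonic_on_line_def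
  proof
    assume H: "\<forall>a b. a \<le> b \<longrightarrow> f (0 + a *\<^sub>R u) \<le> f (0 + b *\<^sub>R u)"
    have "f ((-N) *\<^sub>R u) \<le> f (s *\<^sub>R u)" "f (s *\<^sub>R u) \<le> f (N *\<^sub>R u)"
      "f ((-N) *\<^sub>R u) \<le> f (0 *\<^sub>R u)" "f (0 *\<^sub>R u) \<le> f (N *\<^sub>R u)"
      using H a by (metis add_0)+
    then show ?thesis using assms(2) by simp
  next
    assume H: "\<forall>a b. a \<le> b \<longrightarrow> f (0 + a *\<^sub>R u) \<ge> f (0 + b *\<^sub>R u)"
    have "f ((-N) *\<^sub>R u) \<ge> f (s *\<^sub>R u)" "f (s *\<^sub>R u) \<ge> f (N *\<^sub>R u)"
      "f ((-N) *\<^sub>R u) \<ge> f (0 *\<^sub>R u)" "f (0 *\<^sub>R u) \<ge> f (N *\<^sub>R u)"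
      using H a by (metis add_0)+
    then show ?thesis using assms(2) by simp
  qed
qed

lemma zero_dir:
  fixes f :: "'v::euclidean_space \<Rightarrow> real"
  assumes "DIM('v) = 2" "continuous_on UNIV f"
  shows "\<exists>u \<in> sphere 0 1. f (N *\<^sub>R u) = f ((- N) *\<^sub>R u)"
proof -
  define h where "h u = f (N *\<^sub>R u) - f ((- N) *\<^sub>R u)" for u
  have ch: "continuous_on (sphere 0 1) h" unfolding h_def
    by (intro continuous_intros continuous_on_compose2[OF assms(2)]) auto
  have conn: "connected (h ` sphere 0 1)"
    using connected_continuous_image[OF ch connected_sphere] assms(1) by simp
  obtain e :: 'v where e: "e \<in> Basis" using nonempty_Basis by blast
  then have e1: "e \<in> sphere 0 1" "- e \<in> sphere 0 1" by auto
  have "h (- e) = - h e" unfolding h_def by simp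
  have im: "h e \<in> h ` sphere 0 1" "h (-e) \<in> h ` sphere 0 1" using e1 by auto
  have "0 \<in> h ` sphere 0 1"
  proof (cases "h e \<le> 0")
    case True
    then show ?thesis using connectedD_interval[OF conn im(1) im(2), of 0] \<open>h (- e) = - h e\<close> by auto
  next
    case False
    then show ?thesis using connectedD_interval[OF conn im(2) im(1), of 0] \<open>h (- e) = - h e\<close> by auto
  qed
  then show ?thesis unfolding h_def by auto
qed

theorem lemma1:
  fixes M :: "('v::euclidean_space \<times> real) set" and f :: "'v \<Rightarrow> real"
  assumes "DIM('v) = 2"
    and "dichotomous_IRHS M"
    and "M = {(x, f x) | x. True}"
  shows "\<exists>v. v \<noteq> 0 \<and> (\<forall>t. f (t *\<^sub>R v) = f 0)"
proof -
  have cont: "continuous_on UNIV f"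
    using cont_f[OF assms(2,3)] continuous_at_imp_continuous_on by blast
  have mon: "monotonic_on_line f 0 u" for u using mono_lines[OF assms(2,3)] .
  obtain u where u: "\<And>n. u n \<in> sphere 0 1"
    "\<And>n. f (real n *\<^sub>R u n) = f ((- real n) *\<^sub>R u n)"
  proof -
    have "\<forall>n. \<exists>v \<in> sphere 0 1. f (real n *\<^sub>R v) = f ((- real n) *\<^sub>R v)"
      using zero_dir[OF assms(1) cont] by blast
    then obtain u where "\<forall>n. u n \<in> sphere 0 1 \<and> f (real n *\<^sub>R u n) = f ((- real n) *\<^sub>R u n)"
      by metis
    then show ?thesis using that by blast
  qed
  obtain l r where lr: "l \<in> sphere (0::'v) 1" "strict_mono (r :: nat \<Rightarrow> nat)" "(u \<circ> r) \<longlonglongrightarrow> l"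
    using seq_compactE[OF compact_imp_seq_compact[OF compact_sphere], of u 0 1] u(1) by metis
  have "f (t *\<^sub>R l) = f 0" for t
  proof -
    have lim: "(\<lambda>n. f (t *\<^sub>R u (r n))) \<longlonglongrightarrow> f (t *\<^sub>R l)"
    proof -
      have "(\<lambda>n. t *\<^sub>R u (r n)) \<longlonglongrightarrow> t *\<^sub>R l"
        using lr(3) by (intro tendsto_intros) (simp add: comp_def)
      then show ?thesis using cont continuous_on_tendsto_compose by fastforce
    qed
    obtain K :: nat where K: "\<bar>t\<bar> \<le> real K" using real_arch_simple by blast
    have "eventually (\<lambda>n. f (t *\<^sub>R u (r n)) = f 0) sequentially"
      unfolding eventually_sequentially
    proof (intro exI allI impI)
      fix n assume "K \<le> n"
      then have "K \<le> r n" using seq_suble[OF lr(2), of n] by linarith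
      then have "\<bar>t\<bar> \<le> real (r n)" using K by linarith
      then show "f (t *\<^sub>R u (r n)) = f 0" using seg_const[OF mon u(2)] by blast
    qed
    then have "(\<lambda>n. f (t *\<^sub>R u (r n))) \<longlonglongrightarrow> f 0" by (rule tendsto_eventually)
    then show ?thesis using lim LIMSEQ_unique by blast
  qed
  moreover have "l \<noteq> 0" using lr(1) by auto
  ultimately show ?thesis by blast
qed

end
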